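(* Let $\alpha=(\alpha_n)_{n\ge1}$ be a non-negative non-increasing null sequence with $\alpha_1\le1$, and let $\omega\in(0,1)$. The following are equivalent: (1) the principal Calkin space $\langle\alpha\rangle$ is stable; (2) $\alpha\otimes\alpha\in\langle\alpha\rangle$; (3) there exist $r\in\mathbb N$ and $C>0$ such that $\widetilde M^{(\omega)}_n(\alpha)\le C\,\widetilde K^{(\omega)}_{n+r}(\alpha)$ for every $n\in\mathbb N\cup\{0\}$.
   Context: $c_0$: complex null sequences; for $\beta\in c_0$, $\beta^\star$ is the non-increasing rearrangement of $(|\beta_n|)$. A Calkin space is a linear subspace $\mathfrak i\subseteq c_0$ such that $\gamma\in\mathfrak i,\beta\in c_0,\beta^\star\le\gamma^\star$ termwise imply $\beta\in\mathfrak i$. $\langle\alpha\rangle$ is the smallest Calkin space containing $\alpha$. For $\beta,\gamma\in c_0$, $\beta\otimes\gamma$ is the non-increasing rearrangement with multiplicities of $(|\beta_i\gamma_j|)_{i,j}$; a Calkin space $\mathfrak i$ is stable if the smallest Calkin space containing all $\beta\otimes\gamma$, $\beta,\gamma\in\mathfrak i$, equals $\mathfrak i$. For $n\ge0$: $K^{(\omega)}_n(\alpha)=|\{m:\omega^{n+1}<\alpha_m\le\omega^n\}|$, $\widetilde K^{(\omega)}_n(\alpha)=\sum_{i=0}^nK^{(\omega)}_i(\alpha)$, $M^{(\omega)}_n(\alpha)=\sum_{i+j=n}K^{(\omega)}_i(\alpha)K^{(\omega)}_j(\alpha)$, $\widetilde M^{(\omega)}_n(\alpha)=\sum_{i=0}^nM^{(\omega)}_i(\alpha)$.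 *)

theory Defs
  imports Complex_Main
begin

text \<open>Sequences are indexed from 0 (the paper indexes from 1).\<close>

definition c0 :: "(nat \<Rightarrow> complex) set" where
  "c0 = {\<beta>. \<beta> \<longlonglongrightarrow> 0}"

text \<open>Non-increasing rearrangement (with multiplicities) of a non-negative family
  indexed by an arbitrary type: the n-th entry (0-indexed) is the least t \<ge> 0
  such that at most n indices have value > t.\<close>
definition drearr :: "('a \<Rightarrow> real) \<Rightarrow> nat \<Rightarrow> real" where
  "drearr f n = Inf {t. 0 \<le> t \<and> finite {x. f x > t} \<and> card {x. f x > t} \<le> n}"

definition dstar :: "(nat \<Rightarrow> complex) \<Rightarrow> nat \<Rightarrow> real" where
  "dstar \<beta> = drearr (\<lambda>m. cmod (\<beta> m))"

definition calkin :: "(nat \<Rightarrow> complex) set \<Rightarrow> bool" where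
  "calkin I \<longleftrightarrow> I \<subseteq> c0 \<and> (\<lambda>n. 0) \<in> I
     \<and> (\<forall>x\<in>I. \<forall>y\<in>I. (\<lambda>n. x n + y n) \<in> I)
     \<and> (\<forall>c::complex. \<forall>x\<in>I. (\<lambda>n. c * x n) \<in> I)
     \<and> (\<forall>\<gamma>\<in>I. \<forall>\<beta>\<in>c0. (\<forall>n. dstar \<beta> n \<le> dstar \<gamma> n) \<longrightarrow> \<beta> \<in> I)"

definition calkin_hull :: "(nat \<Rightarrow> complex) set \<Rightarrow> (nat \<Rightarrow> complex) set" where
  "calkin_hull S = \<Inter> {I. calkin I \<and> S \<subseteq> I}"

definition principal :: "(nat \<Rightarrow> complex) \<Rightarrow> (nat \<Rightarrow> complex) set" where
  "principal \<alpha> = calkin_hull {\<alpha>}"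

definition tensor :: "(nat \<Rightarrow> complex) \<Rightarrow> (nat \<Rightarrow> complex) \<Rightarrow> nat \<Rightarrow> complex" where
  "tensor \<beta> \<gamma> = (\<lambda>n. complex_of_real (drearr (\<lambda>(i,j). cmod (\<beta> i * \<gamma> j)) n))"

definition stable :: "(nat \<Rightarrow> complex) set \<Rightarrow> bool" where
  "stable I \<longleftrightarrow> calkin_hull {tensor \<beta> \<gamma> | \<beta> \<gamma>. \<beta> \<in> I \<and> \<gamma> \<in> I} = I"

definition Kw :: "real \<Rightarrow> (nat \<Rightarrow> real) \<Rightarrow> nat \<Rightarrow> nat" where
  "Kw \<omega> \<alpha> n = card {m. \<omega> ^ (n+1) < \<alpha> m \<and> \<alpha> m \<le> \<omega> ^ n}"

definition Kt :: "real \<Rightarrow> (nat \<Rightarrow> real) \<Rightarrow> nat \<Rightarrow> nat" where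
  "Kt \<omega> \<alpha> n = (\<Sum>i\<le>n. Kw \<omega> \<alpha> i)"

definition Mw :: "real \<Rightarrow> (nat \<Rightarrow> real) \<Rightarrow> nat \<Rightarrow> nat" where
  "Mw \<omega> \<alpha> n = (\<Sum>i\<le>n. Kw \<omega> \<alpha> i * Kw \<omega> \<alpha> (n - i))"

definition Mt :: "real \<Rightarrow> (nat \<Rightarrow> real) \<Rightarrow> nat \<Rightarrow> nat" where
  "Mt \<omega> \<alpha> n = (\<Sum>i\<le>n. Mw \<omega> \<alpha> i)"

end

theory Submission
  imports Defs
begin


definition maj :: "('a \<Rightarrow> real) \<Rightarrow> ('b \<Rightarrow> real) \<Rightarrow> real \<Rightarrow> nat \<Rightarrow> bool" where
  "maj f g C k \<longleftrightarrow> (\<forall>s\<ge>0. finite {y. g y > s} \<longrightarrow>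
      finite {x. f x > C*s} \<and> card {x. f x > C*s} \<le> k * card {y. g y > s})"

definition Aset :: "('a \<Rightarrow> real) \<Rightarrow> nat \<Rightarrow> real set" where
  "Aset f n = {t. 0 \<le> t \<and> finite {x. f x > t} \<and> card {x. f x > t} \<le> n}"

definition bnd :: "('a \<Rightarrow> real) \<Rightarrow> bool" where
  "bnd f \<longleftrightarrow> (\<exists>B. \<forall>x. f x \<le> B)"

lemma drearr_Aset: "drearr f n = Inf (Aset f n)"
  by (simp add: drearr_def Aset_def)

lemma Aset_bdd: "bdd_below (Aset f n)"
  unfolding Aset_def by (rule bdd_belowI[of _ 0]) auto

lemma Aset_ne: assumes "bnd f" shows "Aset f n \<noteq> {}"
proof -
  obtain B where B: "\<And>x. f x \<le> B" using assms bnd_def by blast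
  have "{x. f x > max B 0} = {}" using B by (auto simp: not_less intro: order_trans)
  hence "max B 0 \<in> Aset f n" unfolding Aset_def mem_Collect_eq by (simp only: finite.emptyI card.empty) simp
  thus ?thesis by blast
qed

lemma Aset_up: assumes "t \<in> Aset f n" "t \<le> u" shows "u \<in> Aset f n"
proof -
  have sub: "{x. f x > u} \<subseteq> {x. f x > t}" using assms(2) by auto
  have t: "0 \<le> t" "finite {x. f x > t}" "card {x. f x > t} \<le> n" using assms(1) unfolding Aset_def by auto
  have "finite {x. f x > u}" using finite_subset[OF sub t(2)] .
  moreover have "card {x. f x > u} \<le> n" using card_mono[OF t(2) sub] t(3) by linarith
  ultimately show ?thesis using t(1) assms(2) unfolding Aset_def by simp
qed

lemma finite_card_le_from_subsets:
  assumes "\<And>F. finite F \<Longrightarrow> F \<subseteq> X \<Longrightarrow> card F \<le> n"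
  shows "finite X \<and> card X \<le> n"
proof -
  have "finite X"
  proof (rule ccontr)
    assume "infinite X"
    then obtain F where F: "F \<subseteq> X" "card F = Suc n" "finite F"
      using infinite_arbitrarily_large by blast
    have "card F \<le> n" using assms[OF F(3) F(1)] .
    thus False using F(2) by simp
  qed
  thus ?thesis using assms by simp
qed

lemma Inf_in_Aset: assumes ne: "Aset f n \<noteq> {}" shows "Inf (Aset f n) \<in> Aset f n"
proof -
  let ?A = "Aset f n"
  let ?t = "Inf ?A"
  have ge0: "0 \<le> ?t" using ne by (intro cInf_greatest) (auto simp: Aset_def)
  have "card F \<le> n" if F: "finite F" "F \<subseteq> {x. f x > ?t}" for F
  proof (cases "F = {}")
    case True thus ?thesis by simp
  next
    case False
    define m where "m = Min (f ` F)"
    have "m \<in> f ` F" using F False unfolding m_def by (intro Min_in) auto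
    hence "?t < m" using F by auto
    then obtain t where t: "t \<in> ?A" "t < m" using cInf_less_iff[OF ne Aset_bdd] by blast
    have "F \<subseteq> {x. f x > t}"
    proof
      fix x assume "x \<in> F"
      hence "m \<le> f x" unfolding m_def using F by (intro Min_le) auto
      thus "x \<in> {x. f x > t}" using t by auto
    qed
    hence "card F \<le> card {x. f x > t}" using t by (intro card_mono) (auto simp: Aset_def)
    also have "\<dots> \<le> n" using t by (auto simp: Aset_def)
    finally show ?thesis .
  qed
  from finite_card_le_from_subsets[of "{x. f x > ?t}" n, OF this] ge0
  show ?thesis by (auto simp: Aset_def)
qed

lemma drearr_le_iff: assumes "bnd f" shows "drearr f n \<le> s \<longleftrightarrow> s \<in> Aset f n"
proof
  assume "drearr f n \<le> s"
  thus "s \<in> Aset f n" using Inf_in_Aset[OF Aset_ne[OF assms]] Aset_up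
    unfolding drearr_Aset by blast
next
  assume "s \<in> Aset f n"
  thus "drearr f n \<le> s" unfolding drearr_Aset by (rule cInf_lower[OF _ Aset_bdd])
qed

lemma drearr_nonneg: assumes "bnd f" shows "0 \<le> drearr f n"
  using Inf_in_Aset[OF Aset_ne[OF assms]] unfolding drearr_Aset Aset_def by auto

lemma drearr_gt_set: assumes "bnd f" "0 \<le> u"
  shows "{n. drearr f n > u} = (if finite {x. f x > u} then {..<card {x. f x > u}} else UNIV)"
  using drearr_le_iff[OF assms(1)] assms(2) unfolding Aset_def
  by (auto simp: not_le[symmetric])

lemma maj_drearr_f: assumes "bnd f" shows "maj (drearr f) f 1 1"
  unfolding maj_def using drearr_gt_set[OF assms] by auto

lemma maj_f_drearr: assumes "bnd f" shows "maj f (drearr f) 1 1"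
  unfolding maj_def
proof (intro allI impI)
  fix s :: real assume s: "0 \<le> s" "finite {y. drearr f y > s}"
  have "finite {x. f x > s}"
  proof (rule ccontr)
    assume "infinite {x. f x > s}"
    thus False using s drearr_gt_set[OF assms s(1)] by simp
  qed
  thus "finite {x. f x > 1 * s} \<and> card {x. f x > 1 * s} \<le> 1 * card {y. drearr f y > s}"
    using drearr_gt_set[OF assms s(1)] by simp
qed

lemma maj_of_le: assumes "bnd f" "\<And>n. drearr f n \<le> drearr g n" shows "maj f g 1 1"
  unfolding maj_def
proof (intro allI impI)
  fix s :: real assume s: "0 \<le> s" "finite {y. g y > s}"
  let ?n = "card {y. g y > s}"
  have "s \<in> Aset g ?n" using s by (simp add: Aset_def)
  hence "drearr g ?n \<le> s" unfolding drearr_Aset by (rule cInf_lower[OF _ Aset_bdd])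
  hence "drearr f ?n \<le> s" using assms(2) order_trans by blast
  hence "s \<in> Aset f ?n" using drearr_le_iff[OF assms(1)] by blast
  thus "finite {x. f x > 1 * s} \<and> card {x. f x > 1 * s} \<le> 1 * ?n" by (simp add: Aset_def)
qed

lemma le_of_maj: assumes "bnd g" "maj f g 1 1" shows "drearr f n \<le> drearr g n"
proof -
  let ?s = "drearr g n"
  have "?s \<in> Aset g n" using drearr_le_iff[OF assms(1)] by blast
  hence s: "0 \<le> ?s" "finite {y. g y > ?s}" "card {y. g y > ?s} \<le> n" by (auto simp: Aset_def)
  hence "finite {x. f x > ?s}" "card {x. f x > ?s} \<le> card {y. g y > ?s}"
    using assms(2) unfolding maj_def by auto
  hence "?s \<in> Aset f n" using s by (simp add: Aset_def)
  thus ?thesis unfolding drearr_Aset[of f] by (rule cInf_lower[OF _ Aset_bdd])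
qed

lemma maj_trans: assumes "maj f g C k" "maj g h C' k'" "0 \<le> C'"
  shows "maj f h (C*C') (k*k')"
  unfolding maj_def
proof (intro allI impI)
  fix s :: real assume s: "0 \<le> s" "finite {y. h y > s}"
  have 1: "finite {y. g y > C'*s}" "card {y. g y > C'*s} \<le> k' * card {y. h y > s}"
    using assms(2) s unfolding maj_def by auto
  have "0 \<le> C'*s" using s assms(3) by simp
  hence 2: "finite {x. f x > C*(C'*s)}" "card {x. f x > C*(C'*s)} \<le> k * card {y. g y > C'*s}"
    using assms(1) 1 unfolding maj_def by auto
  have "k * card {y. g y > C'*s} \<le> k * (k' * card {y. h y > s})"
    using 1(2) by (rule mult_le_mono2)
  hence "card {x. f x > C*(C'*s)} \<le> k*k' * card {y. h y > s}"
    using 2(2) by (simp only: mult.assoc)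
  thus "finite {x. f x > C*C'*s} \<and> card {x. f x > C*C'*s} \<le> k*k' * card {y. h y > s}"
    using 2(1) by (simp only: mult.assoc)
qed

lemma maj_mono_k: assumes "maj f g C k" "k \<le> k'" shows "maj f g C k'"
  unfolding maj_def
proof (intro allI impI)
  fix s :: real assume "0 \<le> s" "finite {y. g y > s}"
  hence "finite {x. f x > C*s}" "card {x. f x > C*s} \<le> k * card {y. g y > s}"
    using assms(1) unfolding maj_def by auto
  moreover have "k * card {y. g y > s} \<le> k' * card {y. g y > s}" using assms(2) by simp
  ultimately show "finite {x. f x > C*s} \<and> card {x. f x > C*s} \<le> k' * card {y. g y > s}" by linarith
qed



lemma card_UN_sing:
  assumes "finite Y" "\<And>y. y \<in> Y \<Longrightarrow> finite (A y)"
  shows "card (\<Union>y\<in>Y. A y \<times> {y}) = (\<Sum>y\<in>Y. card (A y))"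
proof -
  have "card (\<Union>y\<in>Y. A y \<times> {y}) = (\<Sum>y\<in>Y. card (A y \<times> {y}))"
    using assms by (intro card_UN_disjoint) auto
  also have "\<dots> = (\<Sum>y\<in>Y. card (A y))" by (simp add: card_cartesian_product)
  finally show ?thesis .
qed

lemma maj_prod1:
  assumes mj: "maj f g C k" and C: "C > 0" and f0: "\<And>x. 0 \<le> f x" and g0: "\<And>x. 0 \<le> g x"
    and h0: "\<And>y. 0 \<le> h y"
  shows "maj (\<lambda>(x,y). f x * h y) (\<lambda>(x,y). g x * h y) C k"
  unfolding maj_def
proof (intro allI impI)
  fix s :: real
  assume s: "0 \<le> s" and finG: "finite {p. (case p of (x,y) \<Rightarrow> g x * h y) > s}"
  define G where "G = {p. (case p of (x,y) \<Rightarrow> g x * h y) > s}"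
  define F where "F = {p. (case p of (x,y) \<Rightarrow> f x * h y) > C * s}"
  define Y where "Y = snd ` G"
  define Gy where "Gy y = {x. g x > s / h y}" for y
  define Fy where "Fy y = {x. f x > C * (s / h y)}" for y
  have finY: "finite Y" using finG unfolding Y_def G_def by simp
  have finGy: "finite (Gy y)" if hy: "h y > 0" for y
  proof -
    have "(\<lambda>x. (x,y)) ` Gy y \<subseteq> G"
      using hy unfolding Gy_def G_def by (auto simp: pos_divide_less_eq)
    hence "finite ((\<lambda>x. (x,y)) ` Gy y)" using finG G_def finite_subset by blast
    thus ?thesis by (rule finite_imageD) (auto simp: inj_on_def)
  qed
  have majy: "finite (Fy y) \<and> card (Fy y) \<le> k * card (Gy y)" if hy: "h y > 0" for y
  proof -
    have "0 \<le> s / h y" using s hy by simp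
    have "\<forall>s\<ge>0. finite {y. g y > s} \<longrightarrow> finite {x. f x > C*s} \<and> card {x. f x > C*s} \<le> k * card {y. g y > s}"
      using mj unfolding maj_def .
    from this[rule_format, OF \<open>0 \<le> s / h y\<close>] finGy[OF hy]
    show ?thesis unfolding Fy_def Gy_def by simp
  qed
  have hY: "h y > 0" if "y \<in> Y" for y
  proof -
    from that obtain p where p: "p \<in> G" "y = snd p" unfolding Y_def by blast
    then obtain x where "(x,y) \<in> G" by (cases p) auto
    hence "g x * h y > s" unfolding G_def by simp
    hence "h y \<noteq> 0" using s by auto
    thus ?thesis using h0[of y] by simp
  qed
  have Geq: "G = (\<Union>y\<in>Y. Gy y \<times> {y})"
  proof (intro equalityI subsetI)
    fix p assume p: "p \<in> G"
    obtain x y where xy: "p = (x,y)" by (cases p)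
    have yY: "y \<in> Y" unfolding Y_def using p xy by (simp add: image_iff) (metis snd_conv)
    have "g x * h y > s" using p xy unfolding G_def by simp
    hence "x \<in> Gy y" using hY[OF yY] unfolding Gy_def by (simp add: pos_divide_less_eq)
    thus "p \<in> (\<Union>y\<in>Y. Gy y \<times> {y})" using xy yY by blast
  next
    fix p assume "p \<in> (\<Union>y\<in>Y. Gy y \<times> {y})"
    then obtain x y where xy: "p = (x,y)" "y \<in> Y" "x \<in> Gy y" by blast
    hence "g x * h y > s" using hY[OF xy(2)] unfolding Gy_def by (simp add: pos_divide_less_eq)
    thus "p \<in> G" unfolding G_def xy by simp
  qed
  have Feq: "F = (\<Union>y\<in>Y. Fy y \<times> {y})"
  proof (intro equalityI subsetI)
    fix p assume p: "p \<in> F"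
    obtain x y where xy: "p = (x,y)" by (cases p)
    have fx: "f x * h y > C * s" using p xy unfolding F_def by simp
    have "0 \<le> C*s" using C s by simp
    have "h y \<noteq> 0"
    proof
      assume "h y = 0"
      hence "f x * h y = 0" by simp
      thus False using fx \<open>0 \<le> C*s\<close> by linarith
    qed
    hence hy: "h y > 0" using h0[of y] by simp
    have "C * s / h y < f x" using fx hy by (simp add: pos_divide_less_eq)
    hence xF: "x \<in> Fy y" unfolding Fy_def by simp
    have finFy: "finite (Fy y)" using majy[OF hy] by simp
    have "Fy y \<noteq> {}" using xF by blast
    hence "card (Fy y) > 0" using finFy by (simp add: card_gt_0_iff)
    have "card (Gy y) > 0"
    proof (rule ccontr)
      assume "\<not> card (Gy y) > 0"
      hence "card (Gy y) = 0" by simp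
      hence "card (Fy y) = 0" using majy[OF hy] by simp
      thus False using \<open>card (Fy y) > 0\<close> by simp
    qed
    hence "Gy y \<noteq> {}" by (metis card.empty less_irrefl)
    then obtain x' where x': "x' \<in> Gy y" by blast
    have "g x' * h y > s" using x' hy unfolding Gy_def by (simp add: pos_divide_less_eq)
    hence "(x',y) \<in> G" unfolding G_def by simp
    hence yY: "y \<in> Y" unfolding Y_def by (metis image_eqI snd_conv)
    show "p \<in> (\<Union>y\<in>Y. Fy y \<times> {y})" using xy xF yY by blast
  next
    fix p assume "p \<in> (\<Union>y\<in>Y. Fy y \<times> {y})"
    then obtain x y where xy: "p = (x,y)" "y \<in> Y" "x \<in> Fy y" by blast
    have "C * s / h y < f x" using xy(3) unfolding Fy_def by simp
    hence "f x * h y > C * s" using hY[OF xy(2)] by (simp add: pos_divide_less_eq)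
    thus "p \<in> F" unfolding F_def xy by simp
  qed
  have "finite (Fy y \<times> {y})" if "y \<in> Y" for y using majy[OF hY[OF that]] by simp
  hence finF: "finite F" unfolding Feq using finY by (intro finite_UN_I)
  have "card F = (\<Sum>y\<in>Y. card (Fy y))" unfolding Feq
    using finY majy hY by (intro card_UN_sing) auto
  also have "\<dots> \<le> (\<Sum>y\<in>Y. k * card (Gy y))" using majy hY by (intro sum_mono) auto
  also have "\<dots> = k * (\<Sum>y\<in>Y. card (Gy y))" by (simp add: sum_distrib_left)
  also have "(\<Sum>y\<in>Y. card (Gy y)) = card G" unfolding Geq
    using finY finGy hY by (intro card_UN_sing[symmetric]) auto
  finally show "finite {p. (case p of (x,y) \<Rightarrow> f x * h y) > C * s} \<and>
        card {p. (case p of (x,y) \<Rightarrow> f x * h y) > C * s} \<le> k * card {p. (case p of (x,y) \<Rightarrow> g x * h y) > s}"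
    using finF unfolding F_def G_def by simp
qed

lemma swap_set_eq: "{p. u (prod.swap p) > t} = prod.swap ` {p. (u::_\<Rightarrow>real) p > t}"
  by (auto simp: image_iff)

lemma inj_swap_on: "inj_on prod.swap A" by (metis inj_on_def swap_swap)

lemma maj_swap:
  assumes "maj f g C k"
  shows "maj (\<lambda>p. f (prod.swap p)) (\<lambda>p. g (prod.swap p)) C k"
proof -
  show ?thesis using assms unfolding maj_def
    by (simp only: swap_set_eq card_image[OF inj_swap_on] finite_image_iff[OF inj_swap_on])
qed

lemma maj_prod2:
  assumes mj: "maj f g C k" and C: "C > 0" and f0: "\<And>x. 0 \<le> f x" and g0: "\<And>x. 0 \<le> g x"
    and h0: "\<And>y. 0 \<le> h y"
  shows "maj (\<lambda>(x,y). h x * f y) (\<lambda>(x,y). h x * g y) C k"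
proof -
  have "maj (\<lambda>p. (\<lambda>(x,y). f x * h y) (prod.swap p)) (\<lambda>p. (\<lambda>(x,y). g x * h y) (prod.swap p)) C k"
    by (rule maj_swap[OF maj_prod1[OF assms]])
  moreover have "(\<lambda>(x,y). h x * f y) = (\<lambda>p. f (snd p) * h (fst p))"
    "(\<lambda>(x,y). h x * g y) = (\<lambda>p. g (snd p) * h (fst p))" by (auto simp: fun_eq_iff)
  ultimately show ?thesis by (simp add: case_prod_beta)
qed



lemma calkin_c0: "calkin c0"
  unfolding calkin_def[of c0]
proof (intro conjI ballI allI impI)
  show "c0 \<subseteq> c0" by simp
  show "(\<lambda>n. 0) \<in> c0" unfolding c0_def by simp
next
  fix x y assume "x \<in> c0" "y \<in> c0"
  hence "x \<longlonglongrightarrow> 0" "y \<longlonglongrightarrow> 0" unfolding c0_def by auto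
  from tendsto_add[OF this] show "(\<lambda>n. x n + y n) \<in> c0" unfolding c0_def by simp
next
  fix c :: complex and x assume "x \<in> c0"
  hence "x \<longlonglongrightarrow> 0" unfolding c0_def by auto
  from tendsto_mult_right_zero[OF this] show "(\<lambda>n. c * x n) \<in> c0" unfolding c0_def by simp
next
  fix g b assume "b \<in> c0" thus "b \<in> c0" .
qed

lemma hull_calkin: assumes "X \<subseteq> c0" shows "calkin (calkin_hull X)"
proof -
  let ?F = "{I. calkin I \<and> X \<subseteq> I}"
  have c0F: "c0 \<in> ?F" using calkin_c0 assms by blast
  have P: "I \<subseteq> c0" "(\<lambda>n. 0) \<in> I" "\<And>x y. x \<in> I \<Longrightarrow> y \<in> I \<Longrightarrow> (\<lambda>n. x n + y n) \<in> I"
    "\<And>c x. x \<in> I \<Longrightarrow> (\<lambda>n. c * x n) \<in> I"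
    "\<And>\<gamma> \<beta>. \<gamma> \<in> I \<Longrightarrow> \<beta> \<in> c0 \<Longrightarrow> (\<forall>n. dstar \<beta> n \<le> dstar \<gamma> n) \<Longrightarrow> \<beta> \<in> I"
    if "I \<in> ?F" for I
    using that unfolding mem_Collect_eq calkin_def by blast+
  have 1: "\<Inter> ?F \<subseteq> c0" using c0F by blast
  have 2: "(\<lambda>n. 0) \<in> \<Inter> ?F" using P(2) by blast
  have 3: "\<forall>x\<in>\<Inter> ?F. \<forall>y\<in>\<Inter> ?F. (\<lambda>n. x n + y n) \<in> \<Inter> ?F"
    using P(3) by (simp add: Inter_iff)
  have 4: "\<forall>c. \<forall>x\<in>\<Inter> ?F. (\<lambda>n. c * x n) \<in> \<Inter> ?F"
    using P(4) by (simp add: Inter_iff)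
  have 5: "\<forall>\<gamma>\<in>\<Inter> ?F. \<forall>\<beta>\<in>c0. (\<forall>n. dstar \<beta> n \<le> dstar \<gamma> n) \<longrightarrow> \<beta> \<in> \<Inter> ?F"
    using P(5) by blast
  have "calkin (\<Inter> ?F)" unfolding calkin_def[of "\<Inter> ?F"] using 1 2 3 4 5 by (intro conjI)
  thus ?thesis unfolding calkin_hull_def .
qed

lemma hull_least: "calkin I \<Longrightarrow> X \<subseteq> I \<Longrightarrow> calkin_hull X \<subseteq> I"
  unfolding calkin_hull_def by blast

lemma hull_sup: "X \<subseteq> calkin_hull X"
  unfolding calkin_hull_def by blast

lemma c0_bnd: assumes "\<beta> \<in> c0" shows "bnd (\<lambda>n. cmod (\<beta> n))"
proof -
  have "\<beta> \<longlonglongrightarrow> 0" using assms unfolding c0_def by simp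
  hence "Bseq \<beta>" by (intro convergent_imp_Bseq convergentI)
  thus ?thesis unfolding Bseq_def bnd_def by blast
qed



lemma maj_add:
  assumes "maj f g C1 k1" "maj f' g C2 k2" "\<And>n. h n \<le> f n + f' n"
  shows "maj h g (C1+C2) (k1+k2)"
  unfolding maj_def
proof (intro allI impI)
  fix s :: real assume s: "0 \<le> s" "finite {y. g y > s}"
  have 1: "finite {x. f x > C1*s}" "card {x. f x > C1*s} \<le> k1 * card {y. g y > s}"
    using assms(1) s unfolding maj_def by auto
  have 2: "finite {x. f' x > C2*s}" "card {x. f' x > C2*s} \<le> k2 * card {y. g y > s}"
    using assms(2) s unfolding maj_def by auto
  have sub: "{x. h x > (C1+C2)*s} \<subseteq> {x. f x > C1*s} \<union> {x. f' x > C2*s}"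
  proof
    fix x assume "x \<in> {x. h x > (C1+C2)*s}"
    hence "h x > C1*s + C2*s" by (simp add: distrib_right)
    thus "x \<in> {x. f x > C1*s} \<union> {x. f' x > C2*s}" using assms(3)[of x] by auto
  qed
  have fin: "finite {x. h x > (C1+C2)*s}" using sub 1 2 finite_subset by blast
  have "card {x. h x > (C1+C2)*s} \<le> card ({x. f x > C1*s} \<union> {x. f' x > C2*s})"
    using sub 1 2 by (intro card_mono) auto
  also have "\<dots> \<le> card {x. f x > C1*s} + card {x. f' x > C2*s}" by (rule card_Un_le)
  also have "\<dots> \<le> (k1+k2) * card {y. g y > s}" using 1 2 by (simp add: add_mult_distrib)
  finally show "finite {x. h x > (C1+C2)*s} \<and> card {x. h x > (C1+C2)*s} \<le> (k1+k2) * card {y. g y > s}"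
    using fin by simp
qed

lemma card_div_set:
  assumes "finite X" "0 < (k::nat)"
  shows "card {n. n div k \<in> X} = k * card X"
proof -
  have e: "{n. n div k \<in> X} = (\<lambda>(m,j). m*k+j) ` (X \<times> {..<k})"
  proof
    show "{n. n div k \<in> X} \<subseteq> (\<lambda>(m,j). m*k+j) ` (X \<times> {..<k})"
    proof
      fix n assume "n \<in> {n. n div k \<in> X}"
      moreover have "n = (n div k)*k + n mod k" by simp
      moreover have "n mod k < k" using assms by simp
      ultimately show "n \<in> (\<lambda>(m,j). m*k+j) ` (X \<times> {..<k})" by (auto intro!: image_eqI)
    qed
    show "(\<lambda>(m,j). m*k+j) ` (X \<times> {..<k}) \<subseteq> {n. n div k \<in> X}" by auto
  qed
  have i: "inj_on (\<lambda>(m,j). m*k+j) (X \<times> {..<k})"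
  proof (rule inj_onI, clarify)
    fix m j m' j' assume "j < k" "j' < k" "m*k+j = m'*k+j'"
    moreover have "(m*k+j) div k = m" "(m*k+j) mod k = j" using \<open>j<k\<close> by auto
    moreover have "(m'*k+j') div k = m'" "(m'*k+j') mod k = j'" using \<open>j'<k\<close> by auto
    ultimately show "m = m' \<and> j = j'" by metis
  qed
  show ?thesis unfolding e card_image[OF i] using assms by (simp add: card_cartesian_product)
qed

lemma finite_div_set:
  assumes "finite {n. n div k \<in> X}" "0 < (k::nat)"
  shows "finite X"
proof -
  have "X \<subseteq> (\<lambda>n. n div k) ` {n. n div k \<in> X}"
  proof
    fix m assume "m \<in> X"
    moreover have "(m*k) div k = m" using assms by simp
    ultimately show "m \<in> (\<lambda>n. n div k) ` {n. n div k \<in> X}" by (metis (mono_tags) image_eqI mem_Collect_eq)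
  qed
  thus ?thesis using assms finite_subset by blast
qed



locale seqctx =
  fixes \<alpha> :: "nat \<Rightarrow> real"
  assumes nonneg: "\<And>n. 0 \<le> \<alpha> n" and decr: "\<And>n. \<alpha> (Suc n) \<le> \<alpha> n"
    and lim: "\<alpha> \<longlonglongrightarrow> 0" and le1: "\<alpha> 0 \<le> 1"
begin

lemma amono: "m \<le> n \<Longrightarrow> \<alpha> n \<le> \<alpha> m"
  by (rule lift_Suc_antimono_le[of \<alpha>, OF decr])

lemma ale1: "\<alpha> n \<le> 1" using amono[of 0 n] le1 by simp

lemma fin_gt: assumes "s > 0" shows "finite {n. \<alpha> n > s}"
proof -
  obtain N where N: "\<forall>n\<ge>N. norm (\<alpha> n - 0) < s" using LIMSEQ_D[OF lim assms] by blast
  have "{n. \<alpha> n > s} \<subseteq> {..<N}" using N by (auto simp: not_less[symmetric])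
  thus ?thesis using finite_subset by blast
qed

lemma a_c0: "(\<lambda>n. complex_of_real (\<alpha> n)) \<in> c0"
  unfolding c0_def using tendsto_of_real[OF lim] by simp

definition S where "S = {\<beta> \<in> c0. \<exists>C>0. \<exists>k. maj (\<lambda>n. cmod (\<beta> n)) \<alpha> C k}"

lemma a_S: "(\<lambda>n. complex_of_real (\<alpha> n)) \<in> S"
proof -
  have "maj (\<lambda>n. cmod (complex_of_real (\<alpha> n))) \<alpha> 1 1"
    using nonneg unfolding maj_def by simp
  thus ?thesis unfolding S_def using a_c0 by force
qed

lemma calkin_S: "calkin S"
  unfolding calkin_def
proof (intro conjI ballI allI impI)
  show "S \<subseteq> c0" unfolding S_def by blast
  show "(\<lambda>n. 0) \<in> S" unfolding S_def c0_def maj_def by (auto intro: exI[of _ 1])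
next
  fix x y assume "x \<in> S" "y \<in> S"
  then obtain C1 k1 C2 k2 where x: "x \<in> c0" "C1 > 0" "maj (\<lambda>n. cmod (x n)) \<alpha> C1 k1"
    and y: "y \<in> c0" "C2 > 0" "maj (\<lambda>n. cmod (y n)) \<alpha> C2 k2" unfolding S_def by blast
  have "maj (\<lambda>n. cmod (x n + y n)) \<alpha> (C1+C2) (k1+k2)"
    by (rule maj_add[OF x(3) y(3)]) (rule norm_triangle_ineq)
  moreover have "(\<lambda>n. x n + y n) \<in> c0" using x y unfolding c0_def
    using tendsto_add[where a=0 and b=0] by fastforce
  ultimately show "(\<lambda>n. x n + y n) \<in> S" unfolding S_def using x y
    by (intro CollectI conjI exI[of _ "C1+C2"]) auto
next
  fix c :: complex and x assume "x \<in> S"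
  then obtain C k where x: "x \<in> c0" "C > 0" "maj (\<lambda>n. cmod (x n)) \<alpha> C k" unfolding S_def by blast
  have c0: "(\<lambda>n. c * x n) \<in> c0" using x unfolding c0_def by (auto intro: tendsto_mult_right_zero)
  show "(\<lambda>n. c * x n) \<in> S"
  proof (cases "c = 0")
    case True
    have "maj (\<lambda>n. cmod (c * x n)) \<alpha> 1 0" unfolding maj_def True by simp
    thus ?thesis using c0 unfolding S_def by force
  next
    case False
    have "maj (\<lambda>n. cmod (c * x n)) \<alpha> (cmod c * C) k"
      using x(3) False unfolding maj_def by (simp add: norm_mult mult.assoc)
    moreover have "cmod c * C > 0" using False x(2) by simp
    ultimately show ?thesis using c0 unfolding S_def by blast
  qed
next
  fix \<gamma> \<beta> assume g: "\<gamma> \<in> S" and b: "\<beta> \<in> c0" and le: "\<forall>n. dstar \<beta> n \<le> dstar \<gamma> n"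
  then obtain C k where x: "\<gamma> \<in> c0" "C > 0" "maj (\<lambda>n. cmod (\<gamma> n)) \<alpha> C k" unfolding S_def by blast
  have "maj (\<lambda>n. cmod (\<beta> n)) (\<lambda>n. cmod (\<gamma> n)) 1 1"
    using le by (intro maj_of_le c0_bnd b) (simp add: dstar_def)
  from maj_trans[OF this x(3)] x(2) have "maj (\<lambda>n. cmod (\<beta> n)) \<alpha> C k" by simp
  thus "\<beta> \<in> S" using b x(2) unfolding S_def by blast
qed

lemma S_sub: assumes I: "calkin I" and aI: "(\<lambda>n. complex_of_real (\<alpha> n)) \<in> I"
  shows "S \<subseteq> I"
proof
  fix \<beta> assume "\<beta> \<in> S"
  then obtain C k0 where b: "\<beta> \<in> c0" "C > 0" "maj (\<lambda>n. cmod (\<beta> n)) \<alpha> C k0" unfolding S_def by blast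
  define k where "k = Suc k0"
  have k: "0 < k" "maj (\<lambda>n. cmod (\<beta> n)) \<alpha> C k"
    using maj_mono_k[OF b(3)] unfolding k_def by auto
  have Icl: "I \<subseteq> c0" "\<And>x y. x \<in> I \<Longrightarrow> y \<in> I \<Longrightarrow> (\<lambda>n. x n + y n) \<in> I"
    "\<And>c x. x \<in> I \<Longrightarrow> (\<lambda>n. c * x n) \<in> I" "(\<lambda>n. 0) \<in> I"
    "\<And>\<gamma> \<beta>. \<gamma> \<in> I \<Longrightarrow> \<beta> \<in> c0 \<Longrightarrow> (\<And>n. dstar \<beta> n \<le> dstar \<gamma> n) \<Longrightarrow> \<beta> \<in> I"
    using I unfolding calkin_def by blast+
  define Ca where "Ca = (\<lambda>n. complex_of_real C * complex_of_real (\<alpha> n))"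
  have CaI: "Ca \<in> I" unfolding Ca_def by (rule Icl(3)[OF aI])
  have cCa: "cmod (Ca n) = C * \<alpha> n" for n
    unfolding Ca_def using b(2) nonneg[of n] by (simp add: norm_mult)
  define \<gamma> where "\<gamma> j n = (if n mod k = j then complex_of_real (C * \<alpha> (n div k)) else 0)" for j n
  have cg: "cmod (\<gamma> j n) = (if n mod k = j then C * \<alpha> (n div k) else 0)" for j n
    unfolding \<gamma>_def using b(2) nonneg[of "n div k"] by (simp add: norm_mult abs_of_nonneg)
  have lim_div: "(\<lambda>n. complex_of_real (C * \<alpha> (n div k))) \<longlonglongrightarrow> 0"
  proof -
    have "(\<lambda>n. \<alpha> (n div k)) \<longlonglongrightarrow> 0"
    proof (rule LIMSEQ_I)
      fix r :: real assume "0 < r"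
      then obtain N where N: "\<forall>n\<ge>N. norm (\<alpha> n - 0) < r" using LIMSEQ_D[OF lim] by blast
      have "\<forall>n\<ge>N*k. norm (\<alpha> (n div k) - 0) < r"
      proof (intro allI impI)
        fix n assume "N*k \<le> n"
        hence "N*k div k \<le> n div k" by (rule div_le_mono)
        hence "N \<le> n div k" using k(1) by simp
        thus "norm (\<alpha> (n div k) - 0) < r" using N by blast
      qed
      thus "\<exists>no. \<forall>n\<ge>no. norm (\<alpha> (n div k) - 0) < r" by blast
    qed
    from tendsto_of_real[OF tendsto_mult_right_zero[OF this, of C]] show ?thesis by simp
  qed
  have gI: "\<gamma> j \<in> I" if j: "j < k" for j
  proof (rule Icl(5)[OF CaI])
    have "\<gamma> j \<longlonglongrightarrow> 0"
    proof (rule tendsto_0_le[OF lim_div, where K=1])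
      show "\<forall>\<^sub>F n in sequentially. norm (\<gamma> j n) \<le> norm (complex_of_real (C * \<alpha> (n div k))) * 1"
        using b(2) nonneg by (auto simp: \<gamma>_def)
    qed
    thus "\<gamma> j \<in> c0" unfolding c0_def by simp
    have bC: "bnd (\<lambda>n. cmod (Ca n))" using c0_bnd CaI Icl(1) by blast
    have "maj (\<lambda>n. cmod (\<gamma> j n)) (\<lambda>n. cmod (Ca n)) 1 1"
      unfolding maj_def
    proof (intro allI impI)
      fix s :: real assume s: "0 \<le> s" "finite {y. cmod (Ca y) > s}"
      have e: "{x. cmod (\<gamma> j x) > 1*s} = (\<lambda>m. m*k+j) ` {y. cmod (Ca y) > s}"
      proof
        show "{x. cmod (\<gamma> j x) > 1*s} \<subseteq> (\<lambda>m. m*k+j) ` {y. cmod (Ca y) > s}"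
        proof
          fix x assume "x \<in> {x. cmod (\<gamma> j x) > 1*s}"
          hence x: "x mod k = j" "C * \<alpha> (x div k) > s" using s unfolding cg by (auto split: if_splits)
          have "x = (x div k)*k + j" using x(1) by (metis mult_div_mod_eq mult.commute)
          thus "x \<in> (\<lambda>m. m*k+j) ` {y. cmod (Ca y) > s}" using x(2) unfolding cCa by blast
        qed
        show "(\<lambda>m. m*k+j) ` {y. cmod (Ca y) > s} \<subseteq> {x. cmod (\<gamma> j x) > 1*s}"
          using j unfolding cg cCa by auto
      qed
      have i: "inj_on (\<lambda>m. m*k+j) A" for A using k(1) by (auto simp: inj_on_def)
      show "finite {x. cmod (\<gamma> j x) > 1*s} \<and> card {x. cmod (\<gamma> j x) > 1*s} \<le> 1 * card {y. cmod (Ca y) > s}"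
        unfolding e using s(2) card_image[OF i] by simp
    qed
    from le_of_maj[OF bC this] show "dstar (\<gamma> j) n \<le> dstar Ca n" for n by (simp add: dstar_def)
  qed
  have sumI: "(\<lambda>n. \<Sum>j<J. \<gamma> j n) \<in> I" if "J \<le> k" for J
    using that
  proof (induction J)
    case 0 thus ?case using Icl(4) by simp
  next
    case (Suc J)
    have "(\<lambda>n. (\<Sum>j<J. \<gamma> j n) + \<gamma> J n) \<in> I"
      using Suc by (intro Icl(2) gI) auto
    thus ?case by simp
  qed
  define \<Gamma> where "\<Gamma> = (\<lambda>n. complex_of_real (C * \<alpha> (n div k)))"
  have "\<Gamma> = (\<lambda>n. \<Sum>j<k. \<gamma> j n)" unfolding \<Gamma>_def \<gamma>_def using k(1) by (auto simp: fun_eq_iff)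
  hence GI: "\<Gamma> \<in> I" using sumI by auto
  have cG: "cmod (\<Gamma> n) = C * \<alpha> (n div k)" for n unfolding \<Gamma>_def using b(2) nonneg[of "n div k"] by (simp add: norm_mult abs_of_nonneg)
  have bG: "bnd (\<lambda>n. cmod (\<Gamma> n))" using c0_bnd GI Icl(1) by blast
  have "maj (\<lambda>n. cmod (\<beta> n)) (\<lambda>n. cmod (\<Gamma> n)) 1 1"
    unfolding maj_def
  proof (intro allI impI)
    fix s :: real assume s: "0 \<le> s" "finite {y. cmod (\<Gamma> y) > s}"
    define X where "X = {m. \<alpha> m > s / C}"
    have e: "{y. cmod (\<Gamma> y) > s} = {n. n div k \<in> X}"
      unfolding cG X_def using b(2) by (auto simp: pos_divide_less_eq mult.commute)
    have fX: "finite X" using finite_div_set s(2) k(1) unfolding e by blast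
    have "0 \<le> s / C" using s b(2) by simp
    hence "finite {x. cmod (\<beta> x) > C * (s/C)} \<and> card {x. cmod (\<beta> x) > C * (s/C)} \<le> k * card X"
      using k(2) fX unfolding maj_def X_def by blast
    moreover have "C * (s/C) = s" using b(2) by simp
    ultimately show "finite {x. cmod (\<beta> x) > 1*s} \<and> card {x. cmod (\<beta> x) > 1*s} \<le> 1 * card {y. cmod (\<Gamma> y) > s}"
      unfolding e card_div_set[OF fX k(1)] by simp
  qed
  from le_of_maj[OF bG this] have "dstar \<beta> n \<le> dstar \<Gamma> n" for n by (simp add: dstar_def)
  thus "\<beta> \<in> I" using Icl(5)[OF GI b(1)] by blast
qed

lemma P_eq: "principal (\<lambda>n. complex_of_real (\<alpha> n)) = S"
proof
  show "principal (\<lambda>n. complex_of_real (\<alpha> n)) \<subseteq> S"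
    unfolding principal_def using calkin_S a_S by (intro hull_least) auto
  show "S \<subseteq> principal (\<lambda>n. complex_of_real (\<alpha> n))"
    unfolding principal_def calkin_hull_def using S_sub by blast
qed

end



lemma drearr_c0:
  assumes b: "bnd f" and fin: "\<And>e. e > 0 \<Longrightarrow> finite {x. f x > e}"
  shows "(\<lambda>n. complex_of_real (drearr f n)) \<in> c0"
  unfolding c0_def mem_Collect_eq
proof (rule LIMSEQ_I)
  fix r :: real assume r: "0 < r"
  define e where "e = r/2"
  have e: "0 < e" "e < r" using r unfolding e_def by auto
  define N where "N = card {x. f x > e}"
  have "\<forall>n\<ge>N. norm (complex_of_real (drearr f n) - 0) < r"
  proof (intro allI impI)
    fix n assume "N \<le> n"
    hence "e \<in> Aset f n" using fin[OF e(1)] e unfolding Aset_def N_def by auto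
    hence "drearr f n \<le> e" using drearr_le_iff[OF b] by blast
    moreover have "0 \<le> drearr f n" by (rule drearr_nonneg[OF b])
    ultimately show "norm (complex_of_real (drearr f n) - 0) < r" using e by simp
  qed
  thus "\<exists>no. \<forall>n\<ge>no. norm (complex_of_real (drearr f n) - 0) < r" by blast
qed

lemma bnd_prod:
  assumes "\<And>x. 0 \<le> f x" "\<And>y. 0 \<le> h y" "bnd f" "bnd h"
  shows "bnd (\<lambda>(x,y). f x * h y)"
proof -
  obtain B1 B2 where B: "\<And>x. f x \<le> B1" "\<And>y. h y \<le> B2" using assms(3,4) unfolding bnd_def by blast
  have "f x * h y \<le> B1 * B2" for x y
    using B assms(1,2) by (intro mult_mono) (auto intro: order_trans)
  thus ?thesis unfolding bnd_def by auto
qed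

lemma tensor_eq: "tensor \<beta> \<gamma> = (\<lambda>n. complex_of_real (drearr (\<lambda>(i,j). cmod (\<beta> i) * cmod (\<gamma> j)) n))"
  unfolding tensor_def by (simp add: norm_mult case_prod_beta)

lemma tensor_cmod:
  assumes "bnd (\<lambda>(i,j). cmod (\<beta> i) * cmod (\<gamma> j))"
  shows "cmod (tensor \<beta> \<gamma> n) = drearr (\<lambda>(i,j). cmod (\<beta> i) * cmod (\<gamma> j)) n"
  unfolding tensor_eq using drearr_nonneg[OF assms] by simp

lemma real_le_ceil_nat:
  assumes "real x \<le> C * real y"
  shows "x \<le> nat \<lceil>C\<rceil> * y"
proof -
  have "C * real y \<le> real (nat \<lceil>C\<rceil>) * real y"
    by (intro mult_right_mono real_nat_ceiling_ge) simp
  hence "real x \<le> real (nat \<lceil>C\<rceil> * y)" using assms by simp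
  thus ?thesis by (simp only: of_nat_le_iff)
qed

context seqctx
begin

lemma maj_fin: assumes "maj f \<alpha> C k" "C > 0" "e > 0" shows "finite {x. f x > e}"
proof -
  have "0 \<le> e / C" using assms by simp
  moreover have "finite {n. \<alpha> n > e / C}" using fin_gt assms by simp
  ultimately have "finite {x. f x > C * (e / C)}" using assms(1) unfolding maj_def by blast
  thus ?thesis using assms(2) by simp
qed

definition TA :: "nat \<times> nat \<Rightarrow> real" where "TA = (\<lambda>(i,j). \<alpha> i * \<alpha> j)"

lemma TA_eq: "(\<lambda>(i,j). cmod (complex_of_real (\<alpha> i)) * cmod (complex_of_real (\<alpha> j))) = TA"
  unfolding TA_def using nonneg by (auto simp: fun_eq_iff)

lemma bnd_alpha: "bnd \<alpha>" unfolding bnd_def using ale1 by blast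

lemma bnd_TA: "bnd TA"
  unfolding TA_def by (rule bnd_prod[OF nonneg nonneg bnd_alpha bnd_alpha])

lemma tensor_aa_cmod:
  "cmod (tensor (\<lambda>n. complex_of_real (\<alpha> n)) (\<lambda>n. complex_of_real (\<alpha> n)) n) = drearr TA n"
  using tensor_cmod[of "\<lambda>n. complex_of_real (\<alpha> n)" "\<lambda>n. complex_of_real (\<alpha> n)"] TA_eq bnd_TA
  by simp

lemma tensor_S:
  assumes bS: "\<beta> \<in> S" and gS: "\<gamma> \<in> S"
    and aaS: "tensor (\<lambda>n. complex_of_real (\<alpha> n)) (\<lambda>n. complex_of_real (\<alpha> n)) \<in> S"
  shows "tensor \<beta> \<gamma> \<in> S"
proof -
  obtain C1 k1 where 1: "\<beta> \<in> c0" "C1 > 0" "maj (\<lambda>n. cmod (\<beta> n)) \<alpha> C1 k1" using bS unfolding S_def by blast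
  obtain C2 k2 where 2: "\<gamma> \<in> c0" "C2 > 0" "maj (\<lambda>n. cmod (\<gamma> n)) \<alpha> C2 k2" using gS unfolding S_def by blast
  obtain C3 k3 where 3: "C3 > 0"
    "maj (\<lambda>n. cmod (tensor (\<lambda>n. complex_of_real (\<alpha> n)) (\<lambda>n. complex_of_real (\<alpha> n)) n)) \<alpha> C3 k3"
    using aaS unfolding S_def by blast
  have M5: "maj (drearr TA) \<alpha> C3 k3" using 3(2) unfolding tensor_aa_cmod .
  have M4: "maj TA (drearr TA) 1 1" by (rule maj_f_drearr[OF bnd_TA])
  have M45: "maj TA \<alpha> C3 k3" using maj_trans[OF M4 M5] 3(1) by simp
  have M3: "maj (\<lambda>(x,y). \<alpha> x * cmod (\<gamma> y)) TA C2 k2"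
    using maj_prod2[OF 2(3) 2(2) norm_ge_zero nonneg nonneg] unfolding TA_def .
  have M35: "maj (\<lambda>(x,y). \<alpha> x * cmod (\<gamma> y)) \<alpha> (C2*C3) (k2*k3)"
    using maj_trans[OF M3 M45] 3(1) by simp
  have M2: "maj (\<lambda>(x,y). cmod (\<beta> x) * cmod (\<gamma> y)) (\<lambda>(x,y). \<alpha> x * cmod (\<gamma> y)) C1 k1"
    by (rule maj_prod1[OF 1(3) 1(2) norm_ge_zero nonneg norm_ge_zero])
  have M25: "maj (\<lambda>(x,y). cmod (\<beta> x) * cmod (\<gamma> y)) \<alpha> (C1*(C2*C3)) (k1*(k2*k3))"
    by (rule maj_trans[OF M2 M35]) (use 2(2) 3(1) in simp)
  let ?T = "\<lambda>(x,y). cmod (\<beta> x) * cmod (\<gamma> y)"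
  have bT: "bnd ?T" by (rule bnd_prod) (auto intro: c0_bnd 1(1) 2(1))
  have M1: "maj (drearr ?T) ?T 1 1" by (rule maj_drearr_f[OF bT])
  have pos: "C1*(C2*C3) > 0" using 1(2) 2(2) 3(1) by simp
  have M: "maj (\<lambda>n. cmod (tensor \<beta> \<gamma> n)) \<alpha> (C1*(C2*C3)) (k1*(k2*k3))"
    using maj_trans[OF M1 M25] pos unfolding tensor_cmod[OF bT] by simp
  have c0: "tensor \<beta> \<gamma> \<in> c0" unfolding tensor_eq
    by (rule drearr_c0[OF bT]) (rule maj_fin[OF M25 pos])
  show ?thesis unfolding S_def using c0 M pos by blast
qed

end



context seqctx
begin

lemma stable_iff:
  "stable (principal (\<lambda>n. complex_of_real (\<alpha> n))) \<longleftrightarrow>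
   tensor (\<lambda>n. complex_of_real (\<alpha> n)) (\<lambda>n. complex_of_real (\<alpha> n)) \<in> principal (\<lambda>n. complex_of_real (\<alpha> n))"
proof -
  let ?a = "\<lambda>n. complex_of_real (\<alpha> n)"
  let ?P = "principal ?a"
  let ?T = "{tensor \<beta> \<gamma> | \<beta> \<gamma>. \<beta> \<in> ?P \<and> \<gamma> \<in> ?P}"
  have aP: "?a \<in> ?P" unfolding principal_def using hull_sup by blast
  show ?thesis
  proof
    assume "stable ?P"
    hence H: "calkin_hull ?T = ?P" unfolding stable_def .
    have "tensor ?a ?a \<in> ?T" using aP by blast
    thus "tensor ?a ?a \<in> ?P" using hull_sup[of ?T] H by blast
  next
    assume aaP: "tensor ?a ?a \<in> ?P"
    have aaS: "tensor ?a ?a \<in> S" using aaP P_eq by simp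
    have TS: "?T \<subseteq> S"
    proof
      fix t assume "t \<in> ?T"
      then obtain \<beta> \<gamma> where t: "t = tensor \<beta> \<gamma>" "\<beta> \<in> ?P" "\<gamma> \<in> ?P" by blast
      show "t \<in> S" unfolding t(1) using tensor_S[OF _ _ aaS] t(2,3) P_eq by simp
    qed
    have Tc0: "?T \<subseteq> c0" using TS calkin_S unfolding calkin_def by blast
    have HC: "calkin (calkin_hull ?T)" by (rule hull_calkin[OF Tc0])
    have Hcl: "\<And>c x. x \<in> calkin_hull ?T \<Longrightarrow> (\<lambda>n. c * x n) \<in> calkin_hull ?T"
      "(\<lambda>n. 0) \<in> calkin_hull ?T" "calkin_hull ?T \<subseteq> c0"
      "\<And>\<gamma> \<beta>. \<gamma> \<in> calkin_hull ?T \<Longrightarrow> \<beta> \<in> c0 \<Longrightarrow> (\<forall>n. dstar \<beta> n \<le> dstar \<gamma> n) \<Longrightarrow> \<beta> \<in> calkin_hull ?T"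
      using HC unfolding calkin_def by blast+
    have aaH: "tensor ?a ?a \<in> calkin_hull ?T" using aP hull_sup[of ?T] by blast
    have aH: "?a \<in> calkin_hull ?T"
    proof (cases "\<alpha> 0 = 0")
      case True
      have "\<alpha> n = 0" for n using amono[of 0 n] nonneg[of n] True by simp
      hence "?a = (\<lambda>n. 0)" by (simp add: fun_eq_iff)
      thus ?thesis using Hcl(2) by simp
    next
      case False
      hence a0: "\<alpha> 0 > 0" using nonneg[of 0] by simp
      define X where "X = (\<lambda>n. complex_of_real (1 / \<alpha> 0) * tensor ?a ?a n)"
      have XH: "X \<in> calkin_hull ?T" unfolding X_def by (rule Hcl(1)[OF aaH])
      have cX: "cmod (X n) = drearr TA n / \<alpha> 0" for n
        unfolding X_def norm_mult tensor_aa_cmod norm_of_real using a0 by simp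
      have bX: "bnd (\<lambda>n. cmod (X n))" using c0_bnd XH Hcl(3) by blast
      have "maj (\<lambda>n. cmod (?a n)) (\<lambda>n. cmod (X n)) 1 1"
        unfolding maj_def
      proof (intro allI impI)
        fix s :: real assume s: "0 \<le> s" "finite {y. cmod (X y) > s}"
        have e: "{y. cmod (X y) > s} = {n. drearr TA n > \<alpha> 0 * s}"
          unfolding cX using a0 by (auto simp: pos_less_divide_eq mult.commute)
        have u: "0 \<le> \<alpha> 0 * s" using a0 s by simp
        have finT: "finite {p. TA p > \<alpha> 0 * s}"
        proof (rule ccontr)
          assume "infinite {p. TA p > \<alpha> 0 * s}"
          hence "{n. drearr TA n > \<alpha> 0 * s} = UNIV" using drearr_gt_set[OF bnd_TA u] by simp
          thus False using s(2) unfolding e by simp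
        qed
        have cT: "card {y. cmod (X y) > s} = card {p. TA p > \<alpha> 0 * s}"
          unfolding e using drearr_gt_set[OF bnd_TA u] finT by simp
        have sub: "(\<lambda>m. (0,m)) ` {m. \<alpha> m > s} \<subseteq> {p. TA p > \<alpha> 0 * s}"
          using a0 unfolding TA_def by auto
        have inj: "inj_on (\<lambda>m. (0::nat,m)) A" for A by (simp add: inj_on_def)
        have fa: "finite {m. \<alpha> m > s}"
          using finite_subset[OF sub finT] by (rule finite_imageD) (rule inj)
        have "card {m. \<alpha> m > s} \<le> card {p. TA p > \<alpha> 0 * s}"
          using card_mono[OF finT sub] card_image[OF inj, of "{m. \<alpha> m > s}"] by linarith
        thus "finite {x. cmod (?a x) > 1 * s} \<and> card {x. cmod (?a x) > 1 * s} \<le> 1 * card {y. cmod (X y) > s}"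
          using fa cT nonneg by simp
      qed
      from le_of_maj[OF bX this] have "\<forall>n. dstar ?a n \<le> dstar X n" by (simp add: dstar_def)
      thus ?thesis using Hcl(4)[OF XH a_c0] by blast
    qed
    have "calkin_hull ?T \<subseteq> S" by (rule hull_least[OF calkin_S TS])
    moreover have "S \<subseteq> calkin_hull ?T" by (rule S_sub[OF HC aH])
    ultimately have "calkin_hull ?T = ?P" using P_eq by simp
    thus "stable ?P" unfolding stable_def .
  qed
qed

end



locale seqw = seqctx +
  fixes \<omega> :: real
  assumes w0: "0 < \<omega>" and w1: "\<omega> < 1"
begin

definition B :: "nat \<Rightarrow> nat set" where
  "B i = {m. \<omega> ^ (i+1) < \<alpha> m \<and> \<alpha> m \<le> \<omega> ^ i}"

lemma pow_anti: "a \<le> b \<Longrightarrow> \<omega> ^ b \<le> \<omega> ^ a"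
  using w0 w1 by (intro power_decreasing) auto

lemma pow_lt_imp: assumes "\<omega> ^ a < \<omega> ^ b" shows "b < a"
proof (rule ccontr)
  assume "\<not> b < a"
  hence "a \<le> b" by simp
  hence "\<omega> ^ b \<le> \<omega> ^ a" by (rule pow_anti)
  with assms show False by simp
qed

lemma band_ex: assumes "0 < x" "x \<le> 1" shows "\<exists>j. \<omega> ^ (j+1) < x \<and> x \<le> \<omega> ^ j"
proof -
  have "(\<lambda>n. \<omega> ^ n) \<longlonglongrightarrow> 0" using w0 w1 by (intro LIMSEQ_power_zero) auto
  then obtain N where N: "\<forall>n\<ge>N. norm (\<omega> ^ n - 0) < x" using LIMSEQ_D assms(1) by blast
  hence ex: "\<exists>n. \<omega> ^ n < x" using w0 by auto
  define n where "n = (LEAST n. \<omega> ^ n < x)"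
  have n1: "\<omega> ^ n < x" unfolding n_def by (rule LeastI_ex[OF ex])
  have "n \<noteq> 0"
  proof
    assume "n = 0"
    with n1 have "1 < x" by simp
    with assms(2) show False by simp
  qed
  then obtain j where j: "n = Suc j" by (cases n) auto
  have "\<not> \<omega> ^ j < x"
  proof
    assume "\<omega> ^ j < x"
    hence "n \<le> j" unfolding n_def by (rule Least_le)
    with j show False by simp
  qed
  thus ?thesis using n1 j by (auto simp: not_less)
qed

lemma band_disj: assumes "m \<in> B i" "m \<in> B j" shows "i = j"
proof (rule ccontr)
  assume "i \<noteq> j"
  hence "i < j \<or> j < i" by auto
  thus False
  proof
    assume "i < j"
    hence "\<omega> ^ j \<le> \<omega> ^ (i+1)" by (intro pow_anti) simp
    thus False using assms unfolding B_def by auto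
  next
    assume "j < i"
    hence "\<omega> ^ i \<le> \<omega> ^ (j+1)" by (intro pow_anti) simp
    thus False using assms unfolding B_def by auto
  qed
qed

lemma finB: "finite (B i)"
proof -
  have "B i \<subseteq> {m. \<alpha> m > \<omega> ^ (i+1)}" unfolding B_def by auto
  thus ?thesis using fin_gt[of "\<omega> ^ (i+1)"] w0 finite_subset by auto
qed

lemma Kw_B: "Kw \<omega> \<alpha> i = card (B i)" unfolding Kw_def B_def by simp

lemma Kt_eq: "Kt \<omega> \<alpha> n = card {m. \<alpha> m > \<omega> ^ (n+1)}"
proof -
  have disj: "\<forall>i\<in>{..n}. \<forall>j\<in>{..n}. i \<noteq> j \<longrightarrow> B i \<inter> B j = {}" using band_disj by blast
  have "Kt \<omega> \<alpha> n = card (\<Union>i\<in>{..n}. B i)"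
    unfolding Kt_def Kw_B by (rule card_UN_disjoint[symmetric]) (auto simp: finB disj)
  also have "(\<Union>i\<in>{..n}. B i) = {m. \<alpha> m > \<omega> ^ (n+1)}"
  proof (intro equalityI subsetI)
    fix m assume "m \<in> (\<Union>i\<in>{..n}. B i)"
    then obtain i where i: "i \<le> n" "m \<in> B i" by auto
    have "\<omega> ^ (n+1) \<le> \<omega> ^ (i+1)" using i(1) by (intro pow_anti) simp
    thus "m \<in> {m. \<alpha> m > \<omega> ^ (n+1)}" using i(2) unfolding B_def by auto
  next
    fix m assume "m \<in> {m. \<alpha> m > \<omega> ^ (n+1)}"
    hence m: "\<alpha> m > \<omega> ^ (n+1)" by simp
    have "0 < \<alpha> m" using m w0 by (meson less_trans zero_less_power)
    then obtain j where j: "\<omega> ^ (j+1) < \<alpha> m" "\<alpha> m \<le> \<omega> ^ j" using band_ex ale1 by blast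
    have "\<omega> ^ (n+1) < \<omega> ^ j" using m j by simp
    hence "j \<le> n" using pow_lt_imp by fastforce
    thus "m \<in> (\<Union>i\<in>{..n}. B i)" using j unfolding B_def by auto
  qed
  finally show ?thesis .
qed

definition V :: "nat \<Rightarrow> (nat \<times> nat) set" where
  "V i = (\<Union>j\<in>{..i}. B j \<times> B (i - j))"

definition U :: "nat \<Rightarrow> (nat \<times> nat) set" where
  "U n = (\<Union>i\<in>{..n}. V i)"

lemma finV: "finite (V i)" unfolding V_def by (auto simp: finB)

lemma finU: "finite (U n)" unfolding U_def by (auto simp: finV)

lemma Mw_eq: "Mw \<omega> \<alpha> i = card (V i)"
proof -
  have disj: "\<forall>j\<in>{..i}. \<forall>j'\<in>{..i}. j \<noteq> j' \<longrightarrow> (B j \<times> B (i - j)) \<inter> (B j' \<times> B (i - j')) = {}"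
    using band_disj by blast
  have "Mw \<omega> \<alpha> i = (\<Sum>j\<le>i. card (B j \<times> B (i - j)))"
    unfolding Mw_def Kw_B by (simp add: card_cartesian_product)
  also have "\<dots> = card (V i)" unfolding V_def
    by (rule card_UN_disjoint[symmetric]) (auto simp: finB disj)
  finally show ?thesis .
qed

lemma Mt_eq: "Mt \<omega> \<alpha> n = card (U n)"
proof -
  have disj: "\<forall>i\<in>{..n}. \<forall>i'\<in>{..n}. i \<noteq> i' \<longrightarrow> V i \<inter> V i' = {}"
  proof (intro ballI impI)
    fix i i' :: nat assume "i \<in> {..n}" "i' \<in> {..n}" "i \<noteq> i'"
    show "V i \<inter> V i' = {}"
    proof (rule ccontr)
      assume "V i \<inter> V i' \<noteq> {}"
      then obtain p q where pq: "(p,q) \<in> V i" "(p,q) \<in> V i'" by auto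
      obtain j where j: "j \<le> i" "p \<in> B j" "q \<in> B (i - j)" using pq(1) unfolding V_def by auto
      obtain j' where j': "j' \<le> i'" "p \<in> B j'" "q \<in> B (i' - j')" using pq(2) unfolding V_def by auto
      have "j = j'" using band_disj j(2) j'(2) by blast
      moreover have "i - j = i' - j'" using band_disj j(3) j'(3) by blast
      ultimately have "i = i'" using j(1) j'(1) by linarith
      thus False using \<open>i \<noteq> i'\<close> by simp
    qed
  qed
  have "Mt \<omega> \<alpha> n = (\<Sum>i\<le>n. card (V i))" unfolding Mt_def Mw_eq by simp
  also have "\<dots> = card (U n)" unfolding U_def
    by (rule card_UN_disjoint[symmetric]) (auto simp: finV disj)
  finally show ?thesis .
qed

lemma U_sub: "U n \<subseteq> {p. TA p > \<omega> ^ (n+2)}"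
proof
  fix p assume "p \<in> U n"
  then obtain i j x y where ij: "i \<le> n" "j \<le> i" "p = (x,y)" "x \<in> B j" "y \<in> B (i - j)"
    unfolding U_def V_def by auto
  have "\<omega> ^ (j+1) * \<omega> ^ (i - j + 1) < \<alpha> x * \<alpha> y"
  proof -
    have a: "\<omega> ^ (j+1) < \<alpha> x" "\<omega> ^ (i - j + 1) < \<alpha> y" using ij(4,5) unfolding B_def by auto
    have "0 < \<omega> ^ (j+1)" "0 \<le> \<omega> ^ (i - j + 1)" using w0 by auto
    hence "0 < \<alpha> x" using a by linarith
    thus ?thesis using a \<open>0 \<le> \<omega> ^ (i - j + 1)\<close> by (intro mult_strict_mono) auto
  qed
  moreover have "\<omega> ^ (j+1) * \<omega> ^ (i - j + 1) = \<omega> ^ (i+2)"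
  proof -
    have "\<omega> ^ (j+1) * \<omega> ^ (i - j + 1) = \<omega> ^ (j+1 + (i-j+1))" by (rule power_add[symmetric])
    also have "j+1 + (i-j+1) = i+2" using ij(2) by simp
    finally show ?thesis .
  qed
  moreover have "\<omega> ^ (n+2) \<le> \<omega> ^ (i+2)" using ij(1) by (intro pow_anti) simp
  ultimately have "\<omega> ^ (n+2) < \<alpha> x * \<alpha> y" by linarith
  thus "p \<in> {p. TA p > \<omega> ^ (n+2)}" using ij(3) unfolding TA_def by simp
qed

lemma U_sup: "{p. TA p > \<omega> ^ (n+1)} \<subseteq> U n"
proof
  fix p assume "p \<in> {p. TA p > \<omega> ^ (n+1)}"
  then obtain x y where p: "p = (x,y)" "\<alpha> x * \<alpha> y > \<omega> ^ (n+1)" unfolding TA_def by (cases p) auto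
  have pos: "\<alpha> x * \<alpha> y > 0" using p(2) w0 by (meson less_trans zero_less_power)
  have "\<alpha> x \<noteq> 0" "\<alpha> y \<noteq> 0" using pos by auto
  hence px: "\<alpha> x > 0" "\<alpha> y > 0" using nonneg[of x] nonneg[of y] by auto
  obtain j1 where j1: "\<omega> ^ (j1+1) < \<alpha> x" "\<alpha> x \<le> \<omega> ^ j1" using band_ex[OF px(1) ale1] by blast
  obtain j2 where j2: "\<omega> ^ (j2+1) < \<alpha> y" "\<alpha> y \<le> \<omega> ^ j2" using band_ex[OF px(2) ale1] by blast
  have "\<alpha> x * \<alpha> y \<le> \<omega> ^ j1 * \<omega> ^ j2"
    using j1 j2 nonneg w0 by (intro mult_mono) auto
  hence "\<omega> ^ (n+1) < \<omega> ^ (j1 + j2)" using p(2) by (simp add: power_add)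
  hence le: "j1 + j2 \<le> n" using pow_lt_imp by fastforce
  have "x \<in> B j1" "y \<in> B ((j1+j2) - j1)" using j1 j2 unfolding B_def by auto
  hence "p \<in> V (j1+j2)" unfolding V_def p(1) by fastforce
  thus "p \<in> U n" unfolding U_def using le by auto
qed

end



context seqw
begin

lemma finTA: assumes "e > 0" shows "finite {p. TA p > e}"
proof -
  have "{p. TA p > e} \<subseteq> {m. \<alpha> m > e} \<times> {m. \<alpha> m > e}"
  proof
    fix p assume "p \<in> {p. TA p > e}"
    then obtain x y where p: "p = (x,y)" "\<alpha> x * \<alpha> y > e" unfolding TA_def by (cases p) auto
    have "\<alpha> x * \<alpha> y \<le> \<alpha> x" using nonneg[of x] ale1[of y] by (simp add: mult_left_le)
    moreover have "\<alpha> x * \<alpha> y \<le> \<alpha> y" by (rule mult_left_le_one_le) (simp_all add: nonneg ale1)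
    ultimately show "p \<in> {m. \<alpha> m > e} \<times> {m. \<alpha> m > e}" using p by auto
  qed
  thus ?thesis using fin_gt[OF assms] finite_subset by blast
qed

lemma TA_le1: "TA p \<le> 1"
  unfolding TA_def using nonneg ale1 by (cases p) (auto intro: mult_le_one)

lemma tensor_iff_cond:
  "tensor (\<lambda>n. complex_of_real (\<alpha> n)) (\<lambda>n. complex_of_real (\<alpha> n)) \<in> principal (\<lambda>n. complex_of_real (\<alpha> n))
   \<longleftrightarrow> (\<exists>r::nat. r \<ge> 1 \<and> (\<exists>C::real. C > 0 \<and>
             (\<forall>n. real (Mt \<omega> \<alpha> n) \<le> C * real (Kt \<omega> \<alpha> (n + r)))))"
proof -
  let ?a = "\<lambda>n. complex_of_real (\<alpha> n)"
  have teq: "tensor ?a ?a = (\<lambda>n. complex_of_real (drearr TA n))"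
    using tensor_eq[of ?a ?a] TA_eq by simp
  show ?thesis unfolding P_eq
  proof
    assume "tensor ?a ?a \<in> S"
    then obtain C k where C: "C > 0" "maj (\<lambda>n. cmod (tensor ?a ?a n)) \<alpha> C k"
      unfolding S_def by blast
    have M: "maj (drearr TA) \<alpha> C k" using C(2) unfolding tensor_aa_cmod .
    have MT: "maj TA \<alpha> C k" using maj_trans[OF maj_f_drearr[OF bnd_TA] M] C(1) by simp
    have "(\<lambda>n. \<omega> ^ n) \<longlonglongrightarrow> 0" using w0 w1 by (intro LIMSEQ_power_zero) auto
    moreover have "1 / C > 0" using C(1) by simp
    ultimately obtain j0 where j0: "\<forall>n\<ge>j0. norm (\<omega> ^ n - 0) < 1 / C" by (rule LIMSEQ_D[elim_format]) blast
    have "\<omega> ^ j0 < 1 / C" using j0 w0 by auto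
    hence Cj: "C * \<omega> ^ j0 \<le> 1" using C(1) by (simp add: field_simps)
    define r where "r = j0 + 1"
    have "\<forall>n. real (Mt \<omega> \<alpha> n) \<le> (real k + 1) * real (Kt \<omega> \<alpha> (n + r))"
    proof
      fix n
      define s where "s = \<omega> ^ (n + r + 1)"
      have s0: "0 \<le> s" using w0 unfolding s_def by simp
      have fs: "finite {m. \<alpha> m > s}" using fin_gt w0 unfolding s_def by simp
      have mt: "finite {p. TA p > C * s}" "card {p. TA p > C * s} \<le> k * card {m. \<alpha> m > s}"
        using MT s0 fs unfolding maj_def by blast+
      have "s = \<omega> ^ j0 * \<omega> ^ (n+2)" unfolding s_def r_def
        by (simp add: power_add[symmetric] algebra_simps)
      hence "C * s = (C * \<omega> ^ j0) * \<omega> ^ (n+2)" by (simp only: mult.assoc)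
      also have "\<dots> \<le> 1 * \<omega> ^ (n+2)" by (rule mult_right_mono[OF Cj]) (use w0 in simp)
      finally have "C * s \<le> \<omega> ^ (n+2)" by simp
      hence sub: "{p. TA p > \<omega> ^ (n+2)} \<subseteq> {p. TA p > C * s}" by auto
      have "Mt \<omega> \<alpha> n \<le> card {p. TA p > \<omega> ^ (n+2)}"
        unfolding Mt_eq using U_sub finite_subset[OF sub mt(1)] by (rule card_mono[rotated])
      also have "\<dots> \<le> card {p. TA p > C * s}" by (rule card_mono[OF mt(1) sub])
      also have "\<dots> \<le> k * card {m. \<alpha> m > s}" by (rule mt(2))
      also have "card {m. \<alpha> m > s} = Kt \<omega> \<alpha> (n + r)" unfolding Kt_eq s_def by simp
      finally have "real (Mt \<omega> \<alpha> n) \<le> real k * real (Kt \<omega> \<alpha> (n + r))"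
        by (simp only: of_nat_mult[symmetric] of_nat_le_iff)
      also have "\<dots> \<le> (real k + 1) * real (Kt \<omega> \<alpha> (n + r))" by (intro mult_right_mono) auto
      finally show "real (Mt \<omega> \<alpha> n) \<le> (real k + 1) * real (Kt \<omega> \<alpha> (n + r))" .
    qed
    moreover have "r \<ge> 1" "real k + 1 > 0" unfolding r_def by auto
    ultimately show "\<exists>r::nat. r \<ge> 1 \<and> (\<exists>C::real. C > 0 \<and>
             (\<forall>n. real (Mt \<omega> \<alpha> n) \<le> C * real (Kt \<omega> \<alpha> (n + r))))" by blast
  next
    assume "\<exists>r::nat. r \<ge> 1 \<and> (\<exists>C::real. C > 0 \<and>
             (\<forall>n. real (Mt \<omega> \<alpha> n) \<le> C * real (Kt \<omega> \<alpha> (n + r))))"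
    then obtain r C where r: "r \<ge> 1" "C > 0" "\<And>n. real (Mt \<omega> \<alpha> n) \<le> C * real (Kt \<omega> \<alpha> (n + r))"
      by blast
    have c0: "tensor ?a ?a \<in> c0" unfolding teq
      by (rule drearr_c0[OF bnd_TA finTA])
    define C' where "C' = 1 / \<omega> ^ (r+1)"
    have C'0: "C' > 0" unfolding C'_def using w0 by simp
    define N0 where "N0 = (if finite {m. \<alpha> m > 0} then card {m. \<alpha> m > 0} else 0)"
    define k' where "k' = nat \<lceil>C\<rceil> + N0"
    have MT: "maj TA \<alpha> C' k'"
      unfolding maj_def
    proof (intro allI impI)
      fix s :: real assume s: "0 \<le> s" "finite {m. \<alpha> m > s}"
      show "finite {p. TA p > C' * s} \<and> card {p. TA p > C' * s} \<le> k' * card {m. \<alpha> m > s}"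
      proof (cases "s = 0")
        case True
        have e: "{p. TA p > C' * s} = {m. \<alpha> m > 0} \<times> {m. \<alpha> m > 0}"
          unfolding True TA_def using nonneg by (auto simp: zero_less_mult_iff; meson nonneg not_le)
        have fin: "finite {m. \<alpha> m > 0}" using s(2) True by simp
        have "N0 * N0 \<le> k' * N0" unfolding k'_def by simp
        thus ?thesis unfolding e using fin True N0_def by (simp add: card_cartesian_product)
      next
        case False
        hence sp: "s > 0" using s(1) by simp
        show ?thesis
        proof (cases "s > \<omega> ^ (r+1)")
          case True
          have "C' * s > 1" unfolding C'_def using True w0 by simp
          hence "TA p \<le> C' * s" for p using TA_le1[of p] by linarith
          hence E: "{p. TA p > C' * s} = {}" by (simp add: not_less)
          show ?thesis unfolding E by simp
        next
          case False
          hence sle: "s \<le> \<omega> ^ (r+1)" by simp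
          have "\<omega> ^ (r+1) \<le> 1" using w0 w1 by (intro power_le_one) auto
          hence "s \<le> 1" using sle by linarith
          then obtain m where m: "\<omega> ^ (m+1) < s" "s \<le> \<omega> ^ m" using band_ex[OF sp] by blast
          have mr: "r + 1 \<le> m"
          proof (rule ccontr)
            assume "\<not> r + 1 \<le> m"
            hence "m + 1 \<le> r + 1" by simp
            hence "\<omega> ^ (r+1) \<le> \<omega> ^ (m+1)" by (rule pow_anti)
            thus False using m(1) sle by simp
          qed
          define n where "n = m - (r+1)"
          have nm: "n + 1 + (r + 1) = m + 1" "n + r + 1 = m" unfolding n_def using mr by auto
          have "\<omega> ^ (n+1) * \<omega> ^ (r+1) = \<omega> ^ (m+1)"
            unfolding nm(1)[symmetric] by (rule power_add[symmetric])
          hence "\<omega> ^ (n+1) * \<omega> ^ (r+1) < s" using m(1) by (simp only:)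
          hence lt: "\<omega> ^ (n+1) < C' * s" unfolding C'_def using w0 by (simp add: field_simps)
          have sub: "{p. TA p > C' * s} \<subseteq> U n" using U_sup[of n] lt by auto
          have fin: "finite {p. TA p > C' * s}" using finite_subset[OF sub finU] .
          have sub2: "{x. \<alpha> x > \<omega> ^ m} \<subseteq> {x. \<alpha> x > s}" using m(2) by auto
          have "real (card {p. TA p > C' * s}) \<le> real (Mt \<omega> \<alpha> n)"
            unfolding Mt_eq using card_mono[OF finU sub] by simp
          also have "\<dots> \<le> C * real (Kt \<omega> \<alpha> (n + r))" by (rule r(3))
          also have "Kt \<omega> \<alpha> (n + r) = card {x. \<alpha> x > \<omega> ^ m}" unfolding Kt_eq nm(2) ..
          also have "C * real (card {x. \<alpha> x > \<omega> ^ m}) \<le> C * real (card {x. \<alpha> x > s})"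
            using card_mono[OF s(2) sub2] r(2) by simp
          finally have "card {p. TA p > C' * s} \<le> nat \<lceil>C\<rceil> * card {x. \<alpha> x > s}"
            by (rule real_le_ceil_nat)
          also have "\<dots> \<le> k' * card {x. \<alpha> x > s}" unfolding k'_def by simp
          finally show ?thesis using fin by simp
        qed
      qed
    qed
    have "maj (\<lambda>n. cmod (tensor ?a ?a n)) \<alpha> C' k'"
      using maj_trans[OF maj_drearr_f[OF bnd_TA] MT] C'0 unfolding tensor_aa_cmod by simp
    thus "tensor ?a ?a \<in> S" unfolding S_def using c0 C'0 by blast
  qed
qed

end

theorem theorem2p8:
  fixes \<alpha> :: "nat \<Rightarrow> real" and \<omega> :: real
  assumes "\<And>n. 0 \<le> \<alpha> n"
    and "\<And>n. \<alpha> (Suc n) \<le> \<alpha> n"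
    and "\<alpha> \<longlonglongrightarrow> 0"
    and "\<alpha> 0 \<le> 1"
    and "0 < \<omega>" and "\<omega> < 1"
  defines "a \<equiv> (\<lambda>n. complex_of_real (\<alpha> n))"
  shows "(stable (principal a) \<longleftrightarrow> tensor a a \<in> principal a)
       \<and> (tensor a a \<in> principal a \<longleftrightarrow>
          (\<exists>r::nat. r \<ge> 1 \<and> (\<exists>C::real. C > 0 \<and>
             (\<forall>n. real (Mt \<omega> \<alpha> n) \<le> C * real (Kt \<omega> \<alpha> (n + r))))))"
proof -
  interpret seqw \<alpha> \<omega>
    by unfold_locales (fact assms)+
  show ?thesis unfolding a_def using stable_iff tensor_iff_cond by blast
qed


end
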